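(* Let $\mathbb{F}_q$ be a finite field of characteristic $p$, let $l$ be a prime number dividing an integer $m>l$, assume $p\mid n=lm$, and let $t=\#(D_{n,l}\cap D_{n,m}\cap D_n^+)$. Then: (1) If $p\nmid l$, then $t\le q^{m+\lceil l/p\rceil}(1-q^{-1})$. (2) If $p\mid l$, set $c=\lceil (m-l+1)/l\rceil$; then $t\le q^{m+l-c+\lceil c/p\rceil}(1-q^{-1})$, and if $l\mid m$ then $c=m/l$.
   Context: $g\circ h=g(h)$. A polynomial is decomposable if it equals $g\circ h$ with $\deg g,\deg h\ge2$; $D_n$ is the set of decomposable polynomials of degree $n$ in $\mathbb{F}_q[x]$ and $D_n^+=D_n\setminus\mathbb{F}_q[x^p]$. For a divisor $e$ of $n$, $D_{n,e}=\{g\circ h:\ \deg g=e,\ h\text{ monic},\ h(0)=0,\ \deg h=n/e\}$. *)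

theory Defs
  imports Complex_Main "HOL-Computational_Algebra.Polynomial"
begin

definition decomposable :: "'a::field poly \<Rightarrow> bool" where
  "decomposable f \<longleftrightarrow> (\<exists>g h. f = pcompose g h \<and> degree g \<ge> 2 \<and> degree h \<ge> 2)"

definition D :: "nat \<Rightarrow> 'a::field poly set" where
  "D n = {f. degree f = n \<and> decomposable f}"

definition poly_in_xp :: "nat \<Rightarrow> 'a::field poly \<Rightarrow> bool" where
  "poly_in_xp p f \<longleftrightarrow> (\<forall>i. coeff f i \<noteq> 0 \<longrightarrow> p dvd i)"

definition Dplus :: "nat \<Rightarrow> 'a::field poly set" where
  "Dplus n = {f \<in> D n. \<not> poly_in_xp CHAR('a) f}"

definition Dne :: "nat \<Rightarrow> nat \<Rightarrow> 'a::field poly set" where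
  "Dne n e = {pcompose g h | g h. degree g = e \<and> lead_coeff h = 1 \<and> coeff h 0 = 0 \<and> degree h = n div e}"

end

theory Submission
  imports Defs "HOL-Library.FuncSet"
begin


lemma coeff_mult_le:
  fixes A B :: "'a::field poly"
  assumes "degree A \<le> a" "degree B \<le> b"
  shows "coeff (A*B) (a+b) = coeff A a * coeff B b"
proof (cases "degree A = a \<and> degree B = b")
  case True
  then show ?thesis using coeff_mult_degree_sum[of A B] by simp
next
  case False
  then have "degree A < a \<or> degree B < b" using assms by auto
  then have z: "coeff A a * coeff B b = 0" by (auto simp: coeff_eq_0)
  have "degree (A*B) < a + b" using degree_mult_le[of A B] False assms by linarith
  then show ?thesis using z by (simp add: coeff_eq_0)
qed

lemma pcompose_monom': "pcompose (monom c n) q = smult c (q ^ n)"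
  by (induction n) (auto simp: monom_Suc pcompose_pCons monom_0)

lemma pcompose_split:
  fixes D h :: "'a::field poly"
  assumes "degree D \<le> M"
  shows "pcompose D h = smult (coeff D M) (h^M) + pcompose (D - monom (coeff D M) M) h"
    and "degree (D - monom (coeff D M) M) \<le> M - 1"
proof -
  show "pcompose D h = smult (coeff D M) (h^M) + pcompose (D - monom (coeff D M) M) h"
    by (simp add: pcompose_diff pcompose_monom')
  show "degree (D - monom (coeff D M) M) \<le> M - 1"
  proof (rule degree_le, intro allI impI)
    fix i assume "M - 1 < i"
    then have "i = M \<or> i > M" by auto
    then show "coeff (D - monom (coeff D M) M) i = 0"
      using assms by (auto simp: coeff_monom coeff_eq_0)
  qed
qed

lemma top_coeff_pcompose:
  fixes D h :: "'a::field poly"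
  assumes "degree D \<le> M" "degree h = d" "(M - 1) * d < i"
  shows "coeff (pcompose D h) i = coeff D M * coeff (h^M) i"
proof -
  have "degree (pcompose (D - monom (coeff D M) M) h) \<le> (M - 1) * d"
    using pcompose_split(2)[OF assms(1)] degree_pcompose[of "D - monom (coeff D M) M" h] assms(2)
    by (simp add: mult_right_mono)
  then have "coeff (pcompose (D - monom (coeff D M) M) h) i = 0"
    using assms(3) by (simp add: coeff_eq_0)
  then show ?thesis
    by (subst pcompose_split(1)[OF assms(1), of h]) simp
qed

lemma char_pow_coeff:
  fixes Q :: "'a::field poly"
  assumes "prime CHAR('a)" "coeff (Q ^ CHAR('a)) i \<noteq> 0"
  shows "CHAR('a) dvd i"
  using assms(2)
proof (induction Q arbitrary: i rule: pCons_induct)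
  case 0
  then show ?case using assms(1) by (simp add: prime_gt_0_nat power_0_left)
next
  case (pCons a Q)
  let ?p = "CHAR('a)"
  have e: "pCons a Q = [:a:] + monom 1 1 * Q"
    by (rule poly_eqI) (auto simp: coeff_monom_mult coeff_pCons split: nat.split)
  have cp: "CHAR('a poly) = ?p" by simp
  have "(pCons a Q) ^ ?p = [:a:] ^ ?p + (monom 1 1 * Q) ^ ?p"
    unfolding e by (rule freshmans_dream) (use assms(1) in auto)
  also have "\<dots> = [:a ^ ?p:] + monom 1 ?p * Q ^ ?p"
    by (simp add: power_mult_distrib monom_power poly_const_pow)
  finally have eq: "(pCons a Q) ^ ?p = [:a ^ ?p:] + monom 1 ?p * Q ^ ?p" .
  show ?case
  proof (cases "i = 0")
    case False
    then have "coeff (monom 1 ?p * Q ^ ?p) i \<noteq> 0"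
      using pCons.prems eq by (simp add: coeff_pCons split: nat.splits)
    then have "?p \<le> i" "coeff (Q ^ ?p) (i - ?p) \<noteq> 0"
      by (auto simp: coeff_monom_mult split: if_splits)
    then have "?p dvd (i - ?p)" using pCons.IH by blast
    then show ?thesis using \<open>?p \<le> i\<close> by (metis dvd_diff_nat dvd_refl le_add_diff_inverse2 dvd_add)
  qed simp
qed



lemma wild_vanish:
  fixes G H :: "'a::field poly"
  assumes "prime CHAR('a)" "CHAR('a) dvd e" "degree G = e" "degree H = d"
    "e * d - d < i" "\<not> CHAR('a) dvd i"
  shows "coeff (pcompose G H) i = 0"
proof -
  let ?p = "CHAR('a)"
  have "(e - 1) * d < i" using assms(5) by (simp add: diff_mult_distrib)
  then have "coeff (pcompose G H) i = coeff G e * coeff (H^e) i"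
    using top_coeff_pcompose[of G e H d i] assms by simp
  moreover have "H^e = (H ^ (e div ?p)) ^ ?p"
    using assms(2) by (metis dvd_div_mult_self power_mult)
  moreover have "coeff ((H ^ (e div ?p)) ^ ?p) i = 0"
    using char_pow_coeff[OF assms(1), of "H ^ (e div ?p)" i] assms(6) by blast
  ultimately show ?thesis by simp
qed

lemma pow_diff_coeff:
  fixes A B :: "'a::field poly"
  assumes "lead_coeff A = 1" "lead_coeff B = 1" "degree A = d" "degree B = d"
    "degree (A - B) \<le> d - r" "r \<le> d"
  shows "degree (A^N - B^N) \<le> d*N - r \<and> coeff (A^N - B^N) (d*N - r) = of_nat N * coeff (A - B) (d - r)"
proof (induction N)
  case 0
  then show ?case by simp
next
  case (Suc N)
  show ?case
  proof (cases "N = 0")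
    case True
    then show ?thesis using assms by simp
  next
    case False
    have B0: "B \<noteq> 0" using assms(2) by auto
    have dB: "degree (B^N) = d*N" using degree_power_eq[OF B0, of N] assms(4) by simp
    have cB: "coeff (B^N) (d*N) = 1"
      using lead_coeff_power[of B N] dB assms(2) by simp
    have eq: "A^Suc N - B^Suc N = (A^N - B^N)*A + B^N*(A-B)"
      by (simp add: algebra_simps)
    have dN: "d*N \<ge> d" using False by simp
    have e1: "d * Suc N - r = (d*N - r) + d" using dN assms(6) unfolding mult_Suc_right by arith
    have e2: "d * Suc N - r = d*N + (d - r)" using dN assms(6) unfolding mult_Suc_right by arith
    have d1: "degree ((A^N - B^N)*A) \<le> d * Suc N - r"
      using degree_mult_le[of "A^N - B^N" A] Suc.IH assms(3) e1 by linarith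
    have d2: "degree (B^N*(A-B)) \<le> d * Suc N - r"
      using degree_mult_le[of "B^N" "A-B"] dB assms(5) e2 by linarith
    have c1: "coeff ((A^N - B^N)*A) (d * Suc N - r) = of_nat N * coeff (A - B) (d - r)"
      unfolding e1 using coeff_mult_le[of "A^N - B^N" "d*N - r" A d] Suc.IH assms(1,3) by simp
    have c2: "coeff (B^N*(A-B)) (d * Suc N - r) = coeff (A - B) (d - r)"
      unfolding e2 using coeff_mult_le[of "B^N" "d*N" "A - B" "d - r"] dB cB assms(5) by simp
    show ?thesis
    proof
      show "degree (A ^ Suc N - B ^ Suc N) \<le> d * Suc N - r"
        unfolding eq by (rule degree_add_le[OF d1 d2])
      show "coeff (A ^ Suc N - B ^ Suc N) (d * Suc N - r) = of_nat (Suc N) * coeff (A - B) (d - r)"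
        unfolding eq coeff_add c1 c2 by (simp add: algebra_simps)
    qed
  qed
qed

lemma count_lead:
  fixes A :: "'a::{finite,field} poly set"
  assumes "finite K" "inj_on (\<lambda>g. (lead_coeff g, restrict (coeff g) K)) A" "\<forall>g\<in>A. g \<noteq> 0"
  shows "finite A \<and> card A \<le> (card (UNIV :: 'a set) - 1) * card (UNIV :: 'a set) ^ card K"
proof -
  let ?B = "(UNIV - {0::'a}) \<times> (PiE K (\<lambda>_. UNIV :: 'a set))"
  have fin: "finite ?B" using assms(1) by (intro finite_cartesian_product finite_PiE) auto
  have sub: "(\<lambda>g. (lead_coeff g, restrict (coeff g) K)) ` A \<subseteq> ?B"
    using assms(3) by auto
  have "card ?B = (card (UNIV :: 'a set) - 1) * card (UNIV :: 'a set) ^ card K"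
    using assms(1) by (simp add: card_cartesian_product card_PiE card_Diff_subset)
  then show ?thesis
    using card_inj_on_le[OF assms(2) sub fin] inj_on_finite[OF assms(2) sub fin] by simp
qed

lemma count_plain:
  fixes A :: "'a::{finite,field} poly set"
  assumes "finite K" "inj_on (\<lambda>g. restrict (coeff g) K) A"
  shows "finite A \<and> card A \<le> card (UNIV :: 'a set) ^ card K"
proof -
  let ?B = "(PiE K (\<lambda>_. UNIV :: 'a set))"
  have fin: "finite ?B" using assms(1) by (intro finite_PiE) auto
  have sub: "(\<lambda>g. restrict (coeff g) K) ` A \<subseteq> ?B" by auto
  have "card ?B = card (UNIV :: 'a set) ^ card K"
    using assms(1) by (simp add: card_PiE)
  then show ?thesis
    using card_inj_on_le[OF assms(2) sub fin] inj_on_finite[OF assms(2) sub fin] by simp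
qed

lemma card_nondvd:
  fixes p L :: nat
  assumes "p > 0"
  shows "card {s\<in>{1..<L}. \<not> p dvd s} \<ge> (L - 1) - (L - 1) div p"
proof -
  let ?E = "{s\<in>{1..<L}. \<not> p dvd s}" and ?F = "{s\<in>{1..<L}. p dvd s}"
  have "?F \<subseteq> (\<lambda>j. p*j) ` {1..(L-1) div p}"
  proof
    fix s assume "s \<in> ?F"
    then obtain j where j: "s = p*j" "1 \<le> s" "s < L" by auto
    then have "j \<ge> 1" by (cases j) auto
    moreover have "j \<le> (L-1) div p" using j assms
      by (metis Suc_le_eq Suc_pred' diff_Suc_1 div_le_mono le_simps(2) mult.commute nonzero_mult_div_cancel_right
            not_less0 order.strict_trans1 zero_less_iff_neq_zero)
    ultimately show "s \<in> (\<lambda>j. p*j) ` {1..(L-1) div p}" using j by auto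
  qed
  then have cF: "card ?F \<le> (L-1) div p"
    by (metis (no_types, lifting) card_atLeastAtMost card_image_le diff_Suc_1 finite_atLeastAtMost le_trans card_mono finite_imageI)
  have "{1..<L} = ?E \<union> ?F" by auto
  then have "card {1..<L} \<le> card ?E + card ?F" by (metis card_Un_le)
  then show ?thesis using cF by simp
qed

lemma pcompose_xp:
  fixes g :: "'a::field poly"
  assumes "coeff (pcompose g (monom 1 p)) i \<noteq> 0" "p > 0"
  shows "p dvd i"
  using assms(1)
proof (induction g arbitrary: i rule: pCons_induct)
  case 0 then show ?case by simp
next
  case (pCons a g)
  show ?case
  proof (cases "i = 0")
    case False
    then have "coeff (monom 1 p * pcompose g (monom 1 p)) i \<noteq> 0"
      using pCons.prems by (simp add: pcompose_pCons coeff_pCons split: nat.splits)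
    then have "p \<le> i" "coeff (pcompose g (monom 1 p)) (i - p) \<noteq> 0"
      by (auto simp: coeff_monom_mult split: if_splits)
    then show ?thesis using pCons.IH by (metis dvd_add_left_iff le_add_diff_inverse2 dvd_refl)
  qed simp
qed

lemma ceil_bound:
  fixes L p :: nat
  assumes "p > 0"
  shows "int ((L - 1) div p) + 1 \<le> \<lceil>real L / real p\<rceil> \<or> L = 0"
proof (cases "L = 0")
  case False
  have "p * ((L-1) div p) \<le> L - 1" by simp
  then have "real p * real ((L-1) div p) < real L" using False
    by (metis Suc_pred' less_Suc_eq_le not_gr_zero of_nat_less_iff of_nat_mult)
  then have "real ((L-1) div p) < real L / real p" using assms
    by (simp add: field_simps)
  also have "\<dots> \<le> of_int \<lceil>real L / real p\<rceil>" by (rule le_of_int_ceiling)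
  finally have "int ((L-1) div p) < \<lceil>real L / real p\<rceil>" by linarith
  then show ?thesis by simp
qed simp



lemma finite_field_prime_char: "prime CHAR('a::{finite,field})"
  by (rule prime_CHAR_semidom) (rule finite_imp_CHAR_pos, simp)

lemma card_ge2: "card (UNIV :: 'a::{finite,field} set) \<ge> 2"
proof -
  have "{0::'a, 1} \<subseteq> UNIV" by simp
  then have "card {0::'a, 1} \<le> card (UNIV :: 'a set)" by (rule card_mono[OF finite_UNIV])
  then show ?thesis by simp
qed

lemma final_arith:
  fixes q :: nat and a b :: nat
  assumes "q \<ge> 2" "a + 1 \<le> b" "b \<ge> 1" "real t \<le> real ((q - 1) * q ^ a)"
  shows "real t \<le> real q ^ b * (1 - 1 / real q)"
proof -
  have "real ((q - 1) * q ^ a) = (real q - 1) * real q ^ a" using assms(1) by (simp add: of_nat_diff)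
  also have "\<dots> \<le> (real q - 1) * real q ^ (b - 1)"
    using assms by (intro mult_left_mono power_increasing) auto
  also have "\<dots> = real q ^ b * (1 - 1 / real q)"
    using assms(1,3) by (cases b) (auto simp: field_simps)
  finally show ?thesis using assms(4) by linarith
qed

lemma case1:
  fixes l m :: nat
  assumes "prime l" "m > l" "\<not> CHAR('a) dvd l" "CHAR('a) dvd (l*m)"
  shows "real (card ((Dne (l*m) l \<inter> Dne (l*m) m \<inter> Dplus (l*m)) :: ('a::{finite,field}) poly set))
    \<le> real (card (UNIV::'a set)) ^ (m + nat \<lceil>real l / real CHAR('a)\<rceil>) * (1 - 1 / real (card (UNIV::'a set)))"
proof -
  let ?p = "CHAR('a)" let ?q = "card (UNIV::'a set)"
  let ?S = "(Dne (l*m) l \<inter> Dne (l*m) m \<inter> Dplus (l*m)) :: 'a poly set"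
  have hp: "prime ?p" by (rule finite_field_prime_char)
  have p0: "?p > 0" using hp prime_gt_0_nat by blast
  have l2: "l \<ge> 2" using assms(1) prime_ge_2_nat by blast
  have pm: "?p dvd m" using assms(3,4) hp prime_dvd_mult_iff by blast
  have lm: "l \<le> l*m" "m \<le> l*m" using assms(2) l2 by auto
  have dl: "(l*m) div l = m" "(l*m) div m = l" using l2 assms(2) by auto
  define E where "E = {s\<in>{1..<l}. \<not> ?p dvd s}"
  define K where "K = {1..<m} - (\<lambda>s. m - s) ` E"
  define G1 where "G1 = {g::'a poly. degree g = l}"
  define H1 where "H1 = {h::'a poly. lead_coeff h = 1 \<and> degree h = m \<and> coeff h 0 = 0 \<and>
      (\<forall>s\<in>E. coeff (h^l) (l*m - s) = 0)}"
  have sub: "?S \<subseteq> (\<lambda>(g,h). pcompose g h) ` (G1 \<times> H1)"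
  proof
    fix f assume f: "f \<in> ?S"
    from f obtain g h where gh: "f = pcompose g h" "degree g = l" "lead_coeff h = 1" "coeff h 0 = 0"
      "degree h = m" unfolding Dne_def dl by blast
    from f obtain g' h' where gh': "f = pcompose g' h'" "degree g' = m" "degree h' = l"
      unfolding Dne_def dl by blast
    have "\<forall>s\<in>E. coeff (h^l) (l*m - s) = 0"
    proof
      fix s assume s: "s \<in> E"
      then have s1: "1 \<le> s" "s < l" "\<not> ?p dvd s" unfolding E_def by auto
      have nd: "\<not> ?p dvd (l*m - s)"
      proof
        assume "?p dvd (l*m - s)"
        then have "?p dvd (l*m - (l*m - s))" using assms(4) dvd_diff_nat by blast
        then show False using s1 lm by simp
      qed
      have lt: "m * l - l < l*m - s" using s1(2) lm(1) by (subst mult.commute) linarith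
      have "coeff f (l*m - s) = 0"
        unfolding gh'(1) by (rule wild_vanish[OF hp pm gh'(2,3) lt nd])
      moreover have "coeff f (l*m - s) = coeff g l * coeff (h^l) (l*m - s)"
      proof -
        have e: "(l-1)*m = l*m - m" by (simp add: diff_mult_distrib)
        have "(l-1)*m < l*m - s" unfolding e using s1(2) assms(2) lm(2) by linarith
        then show ?thesis unfolding gh(1) by (intro top_coeff_pcompose) (use gh in auto)
      qed
      moreover have "coeff g l \<noteq> 0"
      proof -
        have "g \<noteq> 0" using gh(2) l2 by auto
        then show ?thesis using gh(2) leading_coeff_0_iff by blast
      qed
      ultimately show "coeff (h^l) (l*m - s) = 0" by simp
    qed
    then have "(g,h) \<in> G1 \<times> H1" using gh unfolding G1_def H1_def by auto
    then show "f \<in> (\<lambda>(g,h). pcompose g h) ` (G1 \<times> H1)" using gh(1) by force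
  qed
  have cG: "finite G1 \<and> card G1 \<le> (?q - 1) * ?q ^ l"
  proof -
    have "inj_on (\<lambda>g. (lead_coeff g, restrict (coeff g) {..<l})) G1"
    proof (rule inj_onI)
      fix g1 g2 assume g: "g1 \<in> G1" "g2 \<in> G1"
        "(lead_coeff g1, restrict (coeff g1) {..<l}) = (lead_coeff g2, restrict (coeff g2) {..<l})"
      show "g1 = g2"
      proof (rule poly_eqI)
        fix i
        show "coeff g1 i = coeff g2 i"
        proof (cases "i < l")
          case True then show ?thesis using g(3) by (metis prod.inject restrict_apply' lessThan_iff)
        next
          case False
          then show ?thesis using g unfolding G1_def by (cases "i = l") (auto simp: coeff_eq_0)
        qed
      qed
    qed
    moreover have "\<forall>g\<in>G1. g \<noteq> 0" using l2 unfolding G1_def by auto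
    ultimately show ?thesis using count_lead[of "{..<l}" G1] by simp
  qed
  have cH: "finite H1 \<and> card H1 \<le> ?q ^ card K"
  proof -
    have "inj_on (\<lambda>h. restrict (coeff h) K) H1"
    proof (rule inj_onI)
      fix h1 h2 assume h: "h1 \<in> H1" "h2 \<in> H1" "restrict (coeff h1) K = restrict (coeff h2) K"
      have agK: "coeff h1 i = coeff h2 i" if "i \<in> K" for i
        using h(3) that by (metis restrict_apply')
      have claim: "\<forall>i. m - s \<le> i \<longrightarrow> coeff h1 i = coeff h2 i" for s
      proof (induction s)
        case 0
        show ?case
        proof (intro allI impI)
          fix i assume "m - 0 \<le> i"
          then have "i = m \<or> i > m" by auto
          then show "coeff h1 i = coeff h2 i" using h(1,2) unfolding H1_def by (auto simp: coeff_eq_0)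
        qed
      next
        case (Suc s)
        show ?case
        proof (intro allI impI)
          fix i assume i: "m - Suc s \<le> i"
          show "coeff h1 i = coeff h2 i"
          proof (cases "m - s \<le> i")
            case True then show ?thesis using Suc.IH by blast
          next
            case False
            then have ie: "i = m - Suc s" "Suc s \<le> m" using i by auto
            show ?thesis
            proof (cases "i = 0 \<or> i \<in> K")
              case True
              then show ?thesis using agK h(1,2) unfolding H1_def by auto
            next
              case False
              then have "i \<in> (\<lambda>s. m - s) ` E" using ie unfolding K_def by auto
              then obtain s' where s': "s' \<in> E" "i = m - s'" by auto
              have s'b: "1 \<le> s'" "s' < l" "\<not> ?p dvd s'" using s'(1) unfolding E_def by auto
              have ss: "s' = Suc s" using s' ie s'b assms(2) by auto
              have dg: "degree (h1 - h2) \<le> m - Suc s"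
                by (rule degree_le) (use Suc.IH in auto)
              have pw: "coeff (h1^l - h2^l) (m*l - Suc s) = of_nat l * coeff (h1 - h2) (m - Suc s)"
                using pow_diff_coeff[of h1 h2 m "Suc s" l] h(1,2) dg ie unfolding H1_def by auto
              have "coeff (h1^l) (l*m - s') = 0" "coeff (h2^l) (l*m - s') = 0"
                using h(1,2) s'(1) unfolding H1_def by auto
              then have "of_nat l * coeff (h1 - h2) (m - Suc s) = (0::'a)"
                using pw ss by (simp add: mult.commute)
              moreover have "of_nat l \<noteq> (0::'a)" using assms(3) of_nat_eq_0_iff_char_dvd by blast
              ultimately show ?thesis using ie by simp
            qed
          qed
        qed
      qed
      show "h1 = h2" by (rule poly_eqI) (use claim[of m] in auto)
    qed
    moreover have "finite K" unfolding K_def by simp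
    ultimately show ?thesis using count_plain[of K H1] by simp
  qed
  have cardK: "card K + card E = m - 1"
  proof -
    have inj: "inj_on (\<lambda>s. m - s) E" unfolding E_def using assms(2) by (auto simp: inj_on_def)
    have "(\<lambda>s. m - s) ` E \<subseteq> {1..<m}" unfolding E_def using assms(2) by auto
    then have "card K = card {1..<m} - card ((\<lambda>s. m - s) ` E)"
      unfolding K_def by (intro card_Diff_subset) (auto intro: finite_subset)
    moreover have "card ((\<lambda>s. m - s) ` E) = card E" using card_image[OF inj] .
    moreover have "card E \<le> m - 1"
    proof -
      have "E \<subseteq> {1..<m}" unfolding E_def using assms(2) by auto
      then show ?thesis using card_mono[of "{1..<m}" E] by simp
    qed
    ultimately show ?thesis by simp
  qed
  have cE: "card E \<ge> (l - 1) - (l - 1) div ?p" unfolding E_def by (rule card_nondvd[OF p0])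
  have cb: "int ((l - 1) div ?p) + 1 \<le> \<lceil>real l / real ?p\<rceil>" using ceil_bound[OF p0, of l] l2 by auto
  have fin: "finite (G1 \<times> H1)" using cG cH by auto
  have "card ?S \<le> card (G1 \<times> H1)"
    using card_mono[OF finite_imageI[OF fin] sub] card_image_le[OF fin, of "\<lambda>(g,h). pcompose g h"] by linarith
  also have "\<dots> = card G1 * card H1" by (rule card_cartesian_product)
  also have "\<dots> \<le> ((?q - 1) * ?q ^ l) * ?q ^ card K" using cG cH by (intro mult_mono) auto
  also have "\<dots> = (?q - 1) * ?q ^ (l + card K)" by (simp add: power_add)
  finally have "real (card ?S) \<le> real ((?q - 1) * ?q ^ (l + card K))" by linarith
  moreover have "l + card K + 1 \<le> m + nat \<lceil>real l / real ?p\<rceil>"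
    using cardK cE cb l2 assms(2) by linarith
  ultimately show ?thesis
    by (intro final_arith[OF card_ge2]) (use assms(2) in auto)
qed



lemma case2:
  fixes l m :: nat
  assumes "prime l" "m > l" "l dvd m" "CHAR('a) dvd l"
  shows "real (card ((Dne (l*m) l \<inter> Dne (l*m) m \<inter> Dplus (l*m)) :: ('a::{finite,field}) poly set))
    \<le> real (card (UNIV::'a set)) ^ (m + l + nat \<lceil>real (m div l) / real l\<rceil> - m div l)
       * (1 - 1 / real (card (UNIV::'a set)))"
proof -
  let ?p = "CHAR('a)" let ?q = "card (UNIV::'a set)"
  let ?S = "(Dne (l*m) l \<inter> Dne (l*m) m \<inter> Dplus (l*m)) :: 'a poly set"
  define k where "k = m div l"
  have hp: "prime ?p" by (rule finite_field_prime_char)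
  have pl: "?p = l" using assms(1,4) hp by (metis prime_nat_iff not_prime_1)
  have l2: "l \<ge> 2" using assms(1) prime_ge_2_nat by blast
  have mk: "m = l*k" unfolding k_def using assms(3) by simp
  have k2: "k \<ge> 2"
  proof (rule ccontr)
    assume "\<not> k \<ge> 2" then have "k \<le> 1" by simp
    then have "l*k \<le> l" by simp
    then show False using mk assms(2) by simp
  qed
  have lm: "l \<le> l*m" "m \<le> l*m" using assms(2) l2 by auto
  have dl: "(l*m) div l = m" "(l*m) div m = l" using l2 assms(2) by auto
  define E where "E = {s\<in>{1..<k}. \<not> l dvd s}"
  define K where "K = {..<m} - (\<lambda>s. m - s) ` E"
  define H2 where "H2 = {h::'a poly. lead_coeff h = 1 \<and> degree h = l \<and> coeff h 0 = 0 \<and> h \<noteq> monom 1 l}"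
  define G2 where "G2 = (\<lambda>h. {g::'a poly. degree g = m \<and>
      (\<forall>i. l*m - m < i \<and> \<not> l dvd i \<longrightarrow> coeff (pcompose g h) i = 0)})"
  have sub: "?S \<subseteq> (\<lambda>(h,g). pcompose g h) ` Sigma H2 G2"
  proof
    fix f assume f: "f \<in> ?S"
    from f obtain g h where gh: "f = pcompose g h" "degree g = l" "degree h = m"
      unfolding Dne_def dl by blast
    from f obtain g' h' where gh': "f = pcompose g' h'" "degree g' = m" "lead_coeff h' = 1"
      "coeff h' 0 = 0" "degree h' = l"
      unfolding Dne_def dl by blast
    have "h' \<noteq> monom 1 l"
    proof
      assume "h' = monom 1 l"
      then have "poly_in_xp ?p f" unfolding poly_in_xp_def gh'(1) pl
        using pcompose_xp l2 by fastforce
      then show False using f unfolding Dplus_def by auto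
    qed
    then have hH: "h' \<in> H2" unfolding H2_def using gh' by auto
    have "\<forall>i. l*m - m < i \<and> \<not> l dvd i \<longrightarrow> coeff f i = 0"
    proof (intro allI impI)
      fix i assume i: "l*m - m < i \<and> \<not> l dvd i"
      show "coeff f i = 0" unfolding gh(1)
        by (rule wild_vanish[OF hp _ gh(2,3)]) (use i pl in auto)
    qed
    then have "g' \<in> G2 h'" unfolding G2_def using gh' by auto
    then show "f \<in> (\<lambda>(h,g). pcompose g h) ` Sigma H2 G2" using hH gh'(1) by force
  qed
  have cH: "finite H2 \<and> card H2 \<le> ?q ^ (l - 1)"
  proof -
    have "inj_on (\<lambda>h. restrict (coeff h) {1..<l}) H2"
    proof (rule inj_onI)
      fix h1 h2 assume h: "h1 \<in> H2" "h2 \<in> H2"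
        "restrict (coeff h1) {1..<l} = restrict (coeff h2) {1..<l}"
      show "h1 = h2"
      proof (rule poly_eqI)
        fix i
        show "coeff h1 i = coeff h2 i"
        proof (cases "i \<in> {1..<l}")
          case True then show ?thesis using h(3) by (metis restrict_apply')
        next
          case False
          then have "i = 0 \<or> i = l \<or> i > l" by auto
          then show ?thesis using h(1,2) unfolding H2_def by (auto simp: coeff_eq_0)
        qed
      qed
    qed
    then show ?thesis using count_plain[of "{1..<l}" H2] by simp
  qed
  have cG: "finite (G2 h) \<and> card (G2 h) \<le> (?q - 1) * ?q ^ card K" if hH: "h \<in> H2" for h
  proof -
    define T where "T = h - monom 1 l"
    have hl: "lead_coeff h = 1" "degree h = l" "coeff h 0 = 0" "h \<noteq> monom 1 l" using hH unfolding H2_def by auto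
    have T0: "T \<noteq> 0" unfolding T_def using hl by auto
    have dT: "degree T \<le> l - 1"
    proof (rule degree_le, intro allI impI)
      fix i assume "l - 1 < i"
      then have "i = l \<or> i > l" by auto
      then show "coeff T i = 0" unfolding T_def using hl by (auto simp: coeff_eq_0)
    qed
    define d0 where "d0 = degree T"
    define a where "a = coeff T d0"
    have a0: "a \<noteq> 0" unfolding a_def d0_def using T0 by simp
    have d01: "d0 \<ge> 1"
    proof (rule ccontr)
      assume "\<not> d0 \<ge> 1" then have "degree T = 0" unfolding d0_def by simp
      moreover have "coeff T 0 = 0" unfolding T_def using hl l2 by simp
      ultimately have "T = 0" using leading_coeff_0_iff[of T] by simp
      then show False using T0 by simp
    qed
    define r where "r = l - d0"
    have r: "1 \<le> r" "r + 1 \<le> l" "l - r = d0" using dT d01 l2 unfolding r_def d0_def by auto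
    have hpow: "coeff (h^j) (l*j - r) = of_nat j * a" if "j \<ge> 1" for j
    proof -
      have pw: "coeff (h^j - (monom 1 l)^j) (l*j - r) = of_nat j * coeff (h - monom 1 l) (l - r)"
        using pow_diff_coeff[of h "monom 1 l" l r j] hl r dT unfolding T_def d0_def
        by (auto simp: degree_monom_eq)
      have "coeff ((monom (1::'a) l)^j) (l*j - r) = 0"
      proof -
        have "l \<le> l*j" using that by simp
        then have "l*j \<noteq> l*j - r" using r by linarith
        then show ?thesis by (simp add: monom_power coeff_monom)
      qed
      then show ?thesis using pw r unfolding T_def a_def by simp
    qed
    have "inj_on (\<lambda>g. (lead_coeff g, restrict (coeff g) K)) (G2 h)"
    proof (rule inj_onI)
      fix g1 g2 assume g: "g1 \<in> G2 h" "g2 \<in> G2 h"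
        "(lead_coeff g1, restrict (coeff g1) K) = (lead_coeff g2, restrict (coeff g2) K)"
      have gd: "degree g1 = m" "degree g2 = m" using g(1,2) unfolding G2_def by auto
      have agK: "coeff g1 i = coeff g2 i" if "i \<in> K" for i
        using g(3) that by (metis prod.inject restrict_apply')
      have vz: "coeff (pcompose g1 h) i = 0" "coeff (pcompose g2 h) i = 0"
        if "l*m - m < i" "\<not> l dvd i" for i
        using g(1,2) that unfolding G2_def by auto
      have claim: "\<forall>i. m - s \<le> i \<longrightarrow> coeff g1 i = coeff g2 i" for s
      proof (induction s)
        case 0
        show ?case
        proof (intro allI impI)
          fix i assume "m - 0 \<le> i"
          then have "i = m \<or> i > m" by auto
          then show "coeff g1 i = coeff g2 i" using g(3) gd by (auto simp: coeff_eq_0)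
        qed
      next
        case (Suc s)
        show ?case
        proof (intro allI impI)
          fix i assume i: "m - Suc s \<le> i"
          show "coeff g1 i = coeff g2 i"
          proof (cases "m - s \<le> i")
            case True then show ?thesis using Suc.IH by blast
          next
            case False
            then have ie: "i = m - Suc s" "Suc s \<le> m" using i by auto
            show ?thesis
            proof (cases "i \<in> K")
              case True
              then show ?thesis using agK by auto
            next
              case False
              then have "i \<in> (\<lambda>s. m - s) ` E" using ie unfolding K_def by auto
              then obtain j' where j': "j' \<in> E" "i = m - j'" by auto
              have j'b: "1 \<le> j'" "j' < k" "\<not> l dvd j'" using j'(1) unfolding E_def by auto
              have km: "k \<le> m" using mk l2 by simp
              have ss: "j' = Suc s" using j' ie j'b km by auto
              have dg: "degree (g1 - g2) \<le> i"
                by (rule degree_le) (use Suc.IH ie in auto)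
              have i1: "i \<ge> 1" using j'(2) j'b km by linarith
              have f1: "l*j' + l \<le> l*k"
              proof -
                have "l*(j'+1) \<le> l*k" using j'b(2) by (intro mult_le_mono2) simp
                then show ?thesis by (simp add: algebra_simps)
              qed
              have f2: "l*i = l*m - l*j'" using j'(2) by (simp add: diff_mult_distrib2)
              have f3: "l*j' \<le> l*m" using j'b km by simp
              have f4: "l \<le> l*i" using i1 by simp
              have pos: "l*m - m < l*i - r" using f1 f2 f3 r mk lm by linarith
              have ndv: "\<not> l dvd (l*i - r)"
              proof
                assume a1: "l dvd (l*i - r)"
                have e0: "l*(i-1) = l*i - l" by (simp add: diff_mult_distrib2)
                have eq: "l*i - r = l*(i-1) + (l - r)" unfolding e0 using f4 r by linarith
                have "l dvd (l - r)" using a1 unfolding eq by (simp add: dvd_add_right_iff)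
                moreover have "0 < l - r" "l - r < l" using r by auto
                ultimately show False using dvd_imp_le by fastforce
              qed
              have ndi: "\<not> l dvd i"
              proof
                assume "l dvd i"
                moreover have "l dvd m" using assms(3) .
                ultimately have "l dvd (m - i)" using dvd_diff_nat by blast
                moreover have "m - i = j'" using j'(2) j'b km by linarith
                ultimately show False using j'b by simp
              qed
              have e5: "(i - 1) * l = l*i - l" by (metis diff_mult_distrib mult.commute mult_1)
              have "(i - 1) * l < l*i - r" unfolding e5 using f4 r by linarith
              then have "coeff (pcompose (g1 - g2) h) (l*i - r) = coeff (g1 - g2) i * coeff (h^i) (l*i - r)"
                using top_coeff_pcompose[OF dg hl(2)] by blast
              moreover have "coeff (pcompose (g1 - g2) h) (l*i - r) = 0"
                using vz[OF pos ndv] by (simp add: pcompose_diff)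
              ultimately have "coeff (g1 - g2) i * (of_nat i * a) = 0" using hpow[OF i1] by simp
              moreover have "of_nat i \<noteq> (0::'a)" using ndi pl of_nat_eq_0_iff_char_dvd by metis
              ultimately show ?thesis using a0 by simp
            qed
          qed
        qed
      qed
      show "g1 = g2" by (rule poly_eqI) (use claim[of m] in auto)
    qed
    moreover have "finite K" unfolding K_def by simp
    moreover have "\<forall>g\<in>G2 h. g \<noteq> 0" unfolding G2_def using assms(2) by auto
    ultimately show ?thesis using count_lead[of K "G2 h"] by simp
  qed
  have cardK: "card K + card E = m"
  proof -
    have km: "k \<le> m" using mk l2 by simp
    have inj: "inj_on (\<lambda>s. m - s) E" unfolding E_def using km by (auto simp: inj_on_def)
    have "(\<lambda>s. m - s) ` E \<subseteq> {..<m}" unfolding E_def using km by auto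
    then have "card K = card {..<m} - card ((\<lambda>s. m - s) ` E)"
      unfolding K_def by (intro card_Diff_subset) (auto intro: finite_subset)
    moreover have "card ((\<lambda>s. m - s) ` E) = card E" using card_image[OF inj] .
    moreover have "card E \<le> m"
    proof -
      have "E \<subseteq> {..<m}" unfolding E_def using km by auto
      then show ?thesis using card_mono[of "{..<m}" E] by simp
    qed
    ultimately show ?thesis by simp
  qed
  have cE: "card E \<ge> (k - 1) - (k - 1) div l" unfolding E_def by (rule card_nondvd) (use l2 in auto)
  have cb: "int ((k - 1) div l) + 1 \<le> \<lceil>real k / real l\<rceil>" using ceil_bound[of l k] l2 k2 by auto
  have finS: "finite (Sigma H2 G2)" using cH cG by (intro finite_SigmaI) auto
  have "card ?S \<le> card (Sigma H2 G2)"
    using card_mono[OF finite_imageI[OF finS] sub] card_image_le[OF finS, of "\<lambda>(h,g). pcompose g h"] by linarith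
  also have "\<dots> = (\<Sum>h\<in>H2. card (G2 h))" using cH cG by (intro card_SigmaI) auto
  also have "\<dots> \<le> card H2 * ((?q - 1) * ?q ^ card K)"
    using sum_bounded_above[of H2 "\<lambda>h. card (G2 h)" "(?q - 1) * ?q ^ card K"] cG by auto
  also have "\<dots> \<le> ?q ^ (l - 1) * ((?q - 1) * ?q ^ card K)" using cH by (intro mult_right_mono) auto
  also have "\<dots> = (?q - 1) * ?q ^ (l - 1 + card K)" by (simp add: power_add)
  finally have "real (card ?S) \<le> real ((?q - 1) * ?q ^ (l - 1 + card K))" by linarith
  moreover have "l - 1 + card K + 1 \<le> m + l + nat \<lceil>real k / real l\<rceil> - k"
  proof -
    define c where "c = nat \<lceil>real k / real l\<rceil>"
    have c0: "0 \<le> \<lceil>real k / real l\<rceil>"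
      by (metis ceiling_mono ceiling_zero divide_nonneg_nonneg of_nat_0_le_iff)
    have hc: "int c = \<lceil>real k / real l\<rceil>" unfolding c_def using c0 by simp
    have "int ((k-1) div l + 1) \<le> int c" using cb hc by simp
    then have c1: "(k-1) div l + 1 \<le> c" by (simp only: of_nat_le_iff)
    have km: "k \<le> m" using mk l2 by simp
    show ?thesis unfolding c_def[symmetric] using cardK cE c1 l2 k2 km by linarith
  qed
  ultimately show ?thesis unfolding k_def
    by (intro final_arith[OF card_ge2]) (use assms(2) k_def in auto)
qed



theorem corollary4p19:
  fixes l m n :: nat
  defines "q \<equiv> card (UNIV :: 'a set)"
  defines "p \<equiv> CHAR('a)"
  defines "t \<equiv> card ((Dne n l \<inter> Dne n m \<inter> Dplus n) :: ('a::{finite,field}) poly set)"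
  assumes "prime l" and "l dvd m" and "m > l" and "n = l * m" and "p dvd n"
  shows "(\<not> p dvd l \<longrightarrow>
            real t \<le> real q ^ (m + nat \<lceil>real l / real p\<rceil>) * (1 - 1 / real q))
       \<and> (p dvd l \<longrightarrow>
            (let c = \<lceil>real (m - l + 1) / real l\<rceil> in
              real t \<le> real q powi (int m + int l - c + \<lceil>real_of_int c / real p\<rceil>) * (1 - 1 / real q)
              \<and> (l dvd m \<longrightarrow> c = int (m div l))))"
proof (intro conjI impI)
  assume "\<not> p dvd l"
  then show "real t \<le> real q ^ (m + nat \<lceil>real l / real p\<rceil>) * (1 - 1 / real q)"
    unfolding t_def q_def p_def assms(7) using case1[of l m] assms by simp
next
  assume pl: "p dvd l"
  define k where "k = m div l"
  have l2: "l \<ge> 2" using assms(4) prime_ge_2_nat by blast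
  have mk: "m = l*k" unfolding k_def using assms(5) by simp
  have hp: "prime p" unfolding p_def by (rule finite_field_prime_char)
  have peq: "p = l" using assms(4) pl hp by (metis prime_nat_iff not_prime_1)
  have ml: "m \<ge> l" using assms(6) by simp
  have c: "\<lceil>real (m - l + 1) / real l\<rceil> = int k"
  proof (rule ceiling_unique)
    have r: "real (m - l + 1) = real l * real k - real l + 1" using ml mk by (simp add: of_nat_diff)
    have lp: "real l \<ge> 2" using l2 by simp
    show "real_of_int (int k) - 1 < real (m - l + 1) / real l"
      unfolding r using lp by (simp add: field_simps)
    show "real (m - l + 1) / real l \<le> real_of_int (int k)"
      unfolding r using lp by (simp add: field_simps)
  qed
  have "real t \<le> real q ^ (m + l + nat \<lceil>real k / real l\<rceil> - k) * (1 - 1 / real q)"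
  proof -
    have "CHAR('a) dvd l" using pl unfolding p_def .
    from case2[OF assms(4) assms(6) assms(5) this] show ?thesis
      unfolding t_def q_def assms(7) k_def .
  qed
  moreover have "int m + int l - int k + \<lceil>real_of_int (int k) / real p\<rceil>
      = int (m + l + nat \<lceil>real k / real l\<rceil> - k)"
  proof -
    have c0: "0 \<le> \<lceil>real k / real l\<rceil>"
      by (metis ceiling_mono ceiling_zero divide_nonneg_nonneg of_nat_0_le_iff)
    have km: "k \<le> m" using mk l2 by simp
    show ?thesis using c0 km peq by simp
  qed
  ultimately show "let c = \<lceil>real (m - l + 1) / real l\<rceil> in
              real t \<le> real q powi (int m + int l - c + \<lceil>real_of_int c / real p\<rceil>) * (1 - 1 / real q)
              \<and> (l dvd m \<longrightarrow> c = int (m div l))"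
    unfolding Let_def c k_def[symmetric] by (simp add: k_def)
qed

end
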